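(* Let $s,t,n$ be positive integers. For $0\le i\le t-1$ let $T_i$ be the set of all lattice paths from $(1,i)$ to $(sn+1,tn+i)$, and let $T=\bigcup_{i=0}^{t-1}T_i$. For $1\le j\le s$, let $U_j$ be the set of paths in $T$ that share at least one lattice point with $A_{s,t}$ and whose first such lattice point (in the order traversed) has $x$-coordinate congruent to $j$ modulo $s$. Then for every $j\in\{1,\dots,s\}$, \[ |U_j| = \binom{sn+tn}{tn-1}, \] and more precisely, for every positive integer $c$, the number of paths in $U_j$ with exactly $c-1$ northwest corners equals $\binom{sn-1}{c-2}\binom{tn+1}{c}$.
   Context: A lattice path is a finite sequence of unit steps, each north $(0,1)$ or east $(1,0)$. For positive integers $s,t$, $A_{s,t}$ is the infinite staircase path that starts at $(0,t)$ and then takes $s$ steps east, $t$ steps north, $s$ steps east, $t$ steps north, and so on forever. A northwest corner of a path is a north step immediately followed by an east step. Binomial coefficients with out-of-range lower index are $0$. *)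

theory Defs
  imports Main
begin

text \<open>A lattice path is represented by its starting point and its list of steps;
  a step True is a north step (0,1), a step False is an east step (1,0).\<close>

definition path_pt :: "int \<times> int \<Rightarrow> bool list \<Rightarrow> nat \<Rightarrow> int \<times> int" where
  "path_pt st ws m = (fst st + int (count_list (take m ws) False),
                      snd st + int (count_list (take m ws) True))"

definition path_points :: "int \<times> int \<Rightarrow> bool list \<Rightarrow> (int \<times> int) set" where
  "path_points st ws = {path_pt st ws m | m. m \<le> length ws}"

definition A_step :: "nat \<Rightarrow> nat \<Rightarrow> nat \<Rightarrow> bool" where
  "A_step s t k = (s \<le> k mod (s + t))"

definition A_pt :: "nat \<Rightarrow> nat \<Rightarrow> nat \<Rightarrow> int \<times> int" where
  "A_pt s t m = (int (card {k. k < m \<and> \<not> A_step s t k}),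
                 int t + int (card {k. k < m \<and> A_step s t k}))"

definition A_points :: "nat \<Rightarrow> nat \<Rightarrow> (int \<times> int) set" where
  "A_points s t = range (A_pt s t)"

definition nw_corners :: "bool list \<Rightarrow> nat" where
  "nw_corners ws = card {k. Suc k < length ws \<and> ws ! k \<and> \<not> ws ! Suc k}"

text \<open>T: pairs (i, ws) encoding the path from (1,i) to (sn+1, tn+i), 0 <= i <= t-1.\<close>

definition T_set :: "nat \<Rightarrow> nat \<Rightarrow> nat \<Rightarrow> (nat \<times> bool list) set" where
  "T_set s t n = {(i, ws). i < t \<and> length ws = s * n + t * n \<and> count_list ws True = t * n}"

definition first_hit :: "nat \<Rightarrow> nat \<Rightarrow> int \<times> int \<Rightarrow> bool list \<Rightarrow> int \<times> int" where
  "first_hit s t st ws =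
     path_pt st ws (LEAST m. m \<le> length ws \<and> path_pt st ws m \<in> A_points s t)"

definition U_set :: "nat \<Rightarrow> nat \<Rightarrow> nat \<Rightarrow> nat \<Rightarrow> (nat \<times> bool list) set" where
  "U_set s t n j = {(i, ws) \<in> T_set s t n.
       path_points (1, int i) ws \<inter> A_points s t \<noteq> {} \<and>
       fst (first_hit s t (1, int i) ws) mod int s = int j mod int s}"

end

theory Submission
  imports Defs
begin


definition words :: "nat \<Rightarrow> nat \<Rightarrow> bool list set" where
  "words a b = {w. count_list w False = a \<and> count_list w True = b}"

lemma length_count: "length w = count_list w False + count_list w True"
  by (induction w) auto

lemma finite_words: "finite (words a b)"
proof -
  have "words a b \<subseteq> {w. set w \<subseteq> UNIV \<and> length w = a + b}"
    unfolding words_def using length_count by auto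
  moreover have "finite {w::bool list. set w \<subseteq> UNIV \<and> length w = a + b}"
    by (rule finite_lists_length_eq) simp
  ultimately show ?thesis by (rule finite_subset)
qed

lemma words_split_set:
  "{w \<in> words a b. F w} =
     (if a = 0 \<and> b = 0 \<and> F [] then {[]} else {}) \<union>
     Cons False ` {w. 0 < a \<and> w \<in> words (a - 1) b \<and> F (False # w)} \<union>
     Cons True ` {w. 0 < b \<and> w \<in> words a (b - 1) \<and> F (True # w)}"
  (is "?L = ?R")
proof
  show "?L \<subseteq> ?R"
  proof
    fix w assume "w \<in> ?L"
    then show "w \<in> ?R"
      by (cases w) (auto simp: words_def split: if_splits)
  qed
next
  show "?R \<subseteq> ?L" by (auto simp: words_def split: if_splits)
qed

lemma card_words_split:
  "card {w \<in> words a b. F w} =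
     (if a = 0 \<and> b = 0 \<and> F [] then 1 else 0) +
     (if 0 < a then card {w \<in> words (a - 1) b. F (False # w)} else 0) +
     (if 0 < b then card {w \<in> words a (b - 1). F (True # w)} else 0)"
proof -
  let ?A = "(if a = 0 \<and> b = 0 \<and> F [] then {[]} else {}) :: bool list set"
  let ?B = "{w. 0 < a \<and> w \<in> words (a - 1) b \<and> F (False # w)}"
  let ?C = "{w. 0 < b \<and> w \<in> words a (b - 1) \<and> F (True # w)}"
  have fB: "finite ?B" by (rule finite_subset[OF _ finite_words[of "a-1" b]]) auto
  have fC: "finite ?C" by (rule finite_subset[OF _ finite_words[of a "b-1"]]) auto
  have d1: "?A \<inter> (Cons False ` ?B \<union> Cons True ` ?C) = {}" by auto
  have d2: "Cons False ` ?B \<inter> Cons True ` ?C = {}" by auto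
  have "card (?A \<union> Cons False ` ?B \<union> Cons True ` ?C) = card ?A + card (Cons False ` ?B) + card (Cons True ` ?C)"
    using d1 d2 fB fC by (simp add: card_Un_disjoint Un_assoc)
  also have "card (Cons False ` ?B) = card ?B" by (simp add: card_image)
  also have "card (Cons True ` ?C) = card ?C" by (simp add: card_image)
  finally have "card {w \<in> words a b. F w} = card ?A + card ?B + card ?C"
    by (simp only: words_split_set)
  moreover have "card ?B = (if 0 < a then card {w \<in> words (a - 1) b. F (False # w)} else 0)"
    by (cases "0 < a") auto
  moreover have "card ?C = (if 0 < b then card {w \<in> words a (b - 1). F (True # w)} else 0)"
    by (cases "0 < b") auto
  ultimately show ?thesis by auto
qed

lemma card_words: "card (words a b) = (a + b) choose b"
proof (induction "a + b" arbitrary: a b)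
  case 0 then show ?case
    using card_words_split[of a b "\<lambda>_. True"] by simp
next
  case (Suc n)
  have "card (words a b) = card {w \<in> words a b. True}" by simp
  also have "\<dots> = (if 0 < a then card (words (a - 1) b) else 0) + (if 0 < b then card (words a (b - 1)) else 0)"
    using card_words_split[of a b "\<lambda>_. True"] Suc(2) by simp
  also have "\<dots> = (a + b) choose b"
  proof (cases a)
    case 0 then show ?thesis using Suc by (cases b) auto
  next
    case (Suc a')
    note a = this
    show ?thesis
    proof (cases b)
      case 0 then show ?thesis using Suc.hyps a by simp
    next
      case (Suc b')
      then show ?thesis using Suc.hyps a by simp
    qed
  qed
  finally show ?case .
qed



fun rE :: "bool \<Rightarrow> bool list \<Rightarrow> nat" where
  "rE f [] = 0"
| "rE f (True # w) = rE False w"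
| "rE f (False # w) = (if f then 0 else 1) + rE True w"

definition wF :: "nat \<Rightarrow> nat \<Rightarrow> nat \<Rightarrow> nat" where
  "wF a b r = (if a = 0 then (if r = 0 then 1 else 0) else if r = 0 then 0
               else ((a - 1) choose (r - 1)) * ((b + 1) choose r))"

lemma card_rE:
  "card {w \<in> words a b. rE True w = r} = (a choose r) * (b choose r) \<and>
   card {w \<in> words a b. rE False w = r} = wF a b r"
proof (induction "a + b" arbitrary: a b r rule: less_induct)
  case less
  have IH1: "\<And>a' b' r'. a' + b' < a + b \<Longrightarrow> card {w \<in> words a' b'. rE True w = r'} = (a' choose r') * (b' choose r')"
    using less by blast
  have IH2: "\<And>a' b' r'. a' + b' < a + b \<Longrightarrow> card {w \<in> words a' b'. rE False w = r'} = wF a' b' r'"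
    using less by blast
  have T: "card {w \<in> words a b. rE True w = r} =
     (if a = 0 \<and> b = 0 \<and> r = 0 then 1 else 0) +
     (if 0 < a then card {w \<in> words (a - 1) b. rE True w = r} else 0) +
     (if 0 < b then card {w \<in> words a (b - 1). rE False w = r} else 0)"
    using card_words_split[of a b "\<lambda>w. rE True w = r"] by simp
  have F: "card {w \<in> words a b. rE False w = r} =
     (if a = 0 \<and> b = 0 \<and> r = 0 then 1 else 0) +
     (if 0 < a then card {w \<in> words (a - 1) b. Suc (rE True w) = r} else 0) +
     (if 0 < b then card {w \<in> words a (b - 1). rE False w = r} else 0)"
    using card_words_split[of a b "\<lambda>w. rE False w = r"] by simp
  show ?case
  proof (cases a)
    case 0
    note a0 = this
    show ?thesis
    proof (cases b)
      case 0 then show ?thesis using T F a0 by (simp add: wF_def)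
    next
      case (Suc b')
      then show ?thesis using T F a0 IH2[of 0 b' r] by (simp add: wF_def)
    qed
  next
    case (Suc a')
    note a = this
    have s1: "card {w \<in> words a' b. Suc (rE True w) = r} = (if r = 0 then 0 else (a' choose (r - 1)) * (b choose (r - 1)))"
    proof (cases r)
      case 0 then show ?thesis by simp
    next
      case (Suc r')
      then show ?thesis using IH1[of a' b r'] a by simp
    qed
    show ?thesis
    proof (cases b)
      case 0
      then show ?thesis using T F a IH1[of a' 0 r] s1
        by (cases r) (auto simp: wF_def)
    next
      case (Suc b')
      have t2: "card {w \<in> words a b'. rE False w = r} = wF a b' r" using IH2[of a b' r] Suc by simp
      have t1: "card {w \<in> words a' b. rE True w = r} = (a' choose r) * (b choose r)" using IH1[of a' b r] a by simp
      show ?thesis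
        using T F a Suc t1 t2 s1
        by (cases r) (auto simp: wF_def algebra_simps)
    qed
  qed
qed



fun st :: "(nat \<Rightarrow> nat) \<Rightarrow> bool \<Rightarrow> bool list \<Rightarrow> nat" where
  "st g f [] = 0"
| "st g f (True # w) = st (\<lambda>b. g (Suc b)) False w"
| "st g f (False # w) = (if f then 0 else 1) +
      (if g 0 \<le> 1 then rE False w else st (\<lambda>b. g b - 1) True w)"

definition aF :: "nat \<Rightarrow> nat \<Rightarrow> nat \<Rightarrow> nat" where
  "aF X Y c = (if c < 2 then 0 else ((Y + 2) choose c) * ((X - 2) choose (c - 2)))"
definition aT :: "nat \<Rightarrow> nat \<Rightarrow> nat \<Rightarrow> nat" where
  "aT X Y c = (if c < 1 then 0 else ((Y + 1) choose c) * ((X - 1) choose (c - 1)))"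

definition gok :: "(nat \<Rightarrow> nat) \<Rightarrow> nat \<Rightarrow> nat \<Rightarrow> bool" where
  "gok g X Y \<longleftrightarrow> (\<forall>b\<le>Y. 1 \<le> g b \<and> g b < X) \<and> (\<forall>b b'. b \<le> b' \<longrightarrow> b' \<le> Y \<longrightarrow> g b \<le> g b')"

lemma recF: "(if c < 1 then 0 else aT (Suc X') Y (c - 1)) + (if 0 < Y then aF (Suc (Suc X')) (Y-1) c else 0) = aF (Suc (Suc X')) Y c"
proof (cases c)
  case 0 then show ?thesis by (simp add: aF_def aT_def)
next
  case (Suc c')
  show ?thesis
  proof (cases c')
    case 0 then show ?thesis using Suc by (simp add: aF_def aT_def)
  next
    case (Suc c'')
    note cc = this
    show ?thesis
    proof (cases Y)
      case 0 then show ?thesis using Suc cc \<open>c = Suc c'\<close> by (simp add: aF_def aT_def)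
    next
      case (Suc Y')
      then show ?thesis using cc \<open>c = Suc c'\<close> by (simp add: aF_def aT_def algebra_simps)
    qed
  qed
qed
lemma recT: "aT (Suc X') Y c + (if 0 < Y then aF (Suc (Suc X')) (Y-1) c else 0) = aT (Suc (Suc X')) Y c"
proof (cases c)
  case 0 then show ?thesis by (simp add: aF_def aT_def)
next
  case (Suc c')
  show ?thesis
  proof (cases c')
    case 0 then show ?thesis using Suc by (simp add: aF_def aT_def)
  next
    case (Suc c'')
    note cc = this
    show ?thesis
    proof (cases Y)
      case 0 then show ?thesis using Suc cc \<open>c = Suc c'\<close> by (simp add: aF_def aT_def)
    next
      case (Suc Y')
      then show ?thesis using cc \<open>c = Suc c'\<close> by (simp add: aF_def aT_def algebra_simps)
    qed
  qed
qed

lemma card_st: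
  "gok g X Y \<Longrightarrow>
   card {w \<in> words X Y. st g False w = c} = aF X Y c \<and>
   card {w \<in> words X Y. st g True w = c} = aT X Y c"
proof (induction "X + Y" arbitrary: X Y g c rule: less_induct)
  case less
  have g0: "1 \<le> g 0" "g 0 < X" using less(2) unfolding gok_def by auto
  define X' where "X' = X - 2"
  have X: "X = Suc (Suc X')" using g0 unfolding X'_def by linarith
  have Fsplit: "\<And>f. card {w \<in> words X Y. st g f w = c} =
     card {w \<in> words (Suc X') Y. st g f (False # w) = c} +
     (if 0 < Y then card {w \<in> words X (Y - 1). st (\<lambda>b. g (Suc b)) False w = c} else 0)"
    using card_words_split[of X Y "\<lambda>w. st g _ w = c"] X by simp
  have Ybr: "0 < Y \<Longrightarrow> card {w \<in> words X (Y - 1). st (\<lambda>b. g (Suc b)) False w = c} = aF X (Y - 1) c"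
  proof -
    assume "0 < Y"
    have "gok (\<lambda>b. g (Suc b)) X (Y - 1)" using less(2) \<open>0 < Y\<close> unfolding gok_def by auto
    then show ?thesis using less(1)[of X "Y - 1"] \<open>0 < Y\<close> by auto
  qed
  have Ebr: "\<And>f. card {w \<in> words (Suc X') Y. st g f (False # w) = c} =
     (if c < (if f then 0 else 1) then 0 else aT (Suc X') Y (c - (if f then 0 else 1)))"
  proof -
    fix f
    let ?d = "(if f then 0 else 1) :: nat"
    show "card {w \<in> words (Suc X') Y. st g f (False # w) = c} = (if c < ?d then 0 else aT (Suc X') Y (c - ?d))"
    proof (cases "g 0 \<le> 1")
      case True
      have "{w \<in> words (Suc X') Y. st g f (False # w) = c} = {w \<in> words (Suc X') Y. ?d + rE False w = c}"
        using True by auto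
      also have "\<dots> = (if c < ?d then {} else {w \<in> words (Suc X') Y. rE False w = c - ?d})" by auto
      finally show ?thesis using card_rE[of "Suc X'" Y "c - ?d"]
        by (auto simp: wF_def aT_def mult.commute)
    next
      case False
      have gk: "gok (\<lambda>b. g b - 1) (Suc X') Y"
        unfolding gok_def
      proof (intro conjI allI impI)
        fix b assume b: "b \<le> Y"
        have "g 0 \<le> g b" using less(2) b unfolding gok_def by auto
        moreover have "g b < X" using less(2) b unfolding gok_def by auto
        ultimately show "1 \<le> g b - 1" "g b - 1 < Suc X'" using False X by linarith+
      next
        fix b b' :: nat assume "b \<le> b'" "b' \<le> Y"
        then have "g b \<le> g b'" using less(2) unfolding gok_def by auto
        then show "g b - 1 \<le> g b' - 1" by linarith
      qed
      have "{w \<in> words (Suc X') Y. st g f (False # w) = c} = {w \<in> words (Suc X') Y. ?d + st (\<lambda>b. g b - 1) True w = c}"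
        using False by auto
      also have "\<dots> = (if c < ?d then {} else {w \<in> words (Suc X') Y. st (\<lambda>b. g b - 1) True w = c - ?d})" by auto
      finally show ?thesis using less(1)[of "Suc X'" Y "\<lambda>b. g b - 1" "c - ?d"] gk X by auto
    qed
  qed
  have Yb: "(if 0 < Y then card {w \<in> words X (Y - 1). st (\<lambda>b. g (Suc b)) False w = c} else 0) = (if 0 < Y then aF X (Y - 1) c else 0)"
    using Ybr by simp
  show ?case
  proof
    have "card {w \<in> words X Y. st g False w = c} = (if c < 1 then 0 else aT (Suc X') Y (c - 1)) + (if 0 < Y then aF X (Y - 1) c else 0)"
      using Fsplit[of False] Ebr[of False] Yb by simp
    then show "card {w \<in> words X Y. st g False w = c} = aF X Y c" using recF[of c X' Y] X by (simp only: X)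
  next
    have "card {w \<in> words X Y. st g True w = c} = aT (Suc X') Y c + (if 0 < Y then aF X (Y - 1) c else 0)"
      using Fsplit[of True] Ebr[of True] Yb by simp
    then show "card {w \<in> words X Y. st g True w = c} = aT X Y c" using recT[of X' Y c] X by (simp only: X)
  qed
qed



abbreviation cF :: "bool list \<Rightarrow> nat" where "cF w \<equiv> count_list w False"
abbreviation cT :: "bool list \<Rightarrow> nat" where "cT w \<equiv> count_list w True"

definition nopass :: "(nat \<Rightarrow> nat) \<Rightarrow> bool list \<Rightarrow> bool" where
  "nopass g v \<longleftrightarrow> (\<forall>k\<le>length v. cF (take k v) < g (cT (take k v)))"

definition passE :: "(nat \<Rightarrow> nat) \<Rightarrow> bool list \<Rightarrow> bool" where
  "passE g v \<longleftrightarrow> g (cT v) \<le> Suc (cF v)"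

lemma nopass_Cons_True: "nopass g (True # v) \<longleftrightarrow> 0 < g 0 \<and> nopass (\<lambda>b. g (Suc b)) v"
  unfolding nopass_def
proof safe
  fix k assume H: "\<forall>k\<le>length (True # v). cF (take k (True # v)) < g (cT (take k (True # v)))" and kl: "k \<le> length v"
  have "Suc k \<le> length (True # v)" using kl by simp
  from H[rule_format, OF this] have "cF (take (Suc k) (True # v)) < g (cT (take (Suc k) (True # v)))" .
  then show "cF (take k v) < g (Suc (cT (take k v)))" by simp
next
  assume "\<forall>k\<le>length (True # v). cF (take k (True # v)) < g (cT (take k (True # v)))"
  then have "cF (take 0 (True # v)) < g (cT (take 0 (True # v)))" by blast
  then show "0 < g 0" by simp
next
  fix k assume a: "0 < g 0" "\<forall>k\<le>length v. cF (take k v) < g (Suc (cT (take k v)))" "k \<le> length (True # v)"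
  then show "cF (take k (True # v)) < g (cT (take k (True # v)))"
    by (cases k) auto
qed

lemma nopass_Cons_False: "nopass g (False # v) \<longleftrightarrow> 0 < g 0 \<and> nopass (\<lambda>b. g b - 1) v \<and> 1 < g 0"
  unfolding nopass_def
proof safe
  fix k assume H: "\<forall>k\<le>length (False # v). cF (take k (False # v)) < g (cT (take k (False # v)))" and kl: "k \<le> length v"
  have "Suc k \<le> length (False # v)" using kl by simp
  from H[rule_format, OF this] have "cF (take (Suc k) (False # v)) < g (cT (take (Suc k) (False # v)))" .
  then show "cF (take k v) < g (cT (take k v)) - 1" by simp
next
  assume "\<forall>k\<le>length (False # v). cF (take k (False # v)) < g (cT (take k (False # v)))"
  then have "cF (take 0 (False # v)) < g (cT (take 0 (False # v)))" by blast
  then show "0 < g 0" by simp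
next
  assume H: "\<forall>k\<le>length (False # v). cF (take k (False # v)) < g (cT (take k (False # v)))"
  have "1 \<le> length (False # v)" by simp
  from H[rule_format, OF this] show "1 < g 0" by simp
next
  fix k assume a: "0 < g 0" "\<forall>k\<le>length v. cF (take k v) < g (cT (take k v)) - 1" "1 < g 0" "k \<le> length (False # v)"
  then show "cF (take k (False # v)) < g (cT (take k (False # v)))"
    by (cases k) auto
qed

lemma st_decomp:
  "nopass g v \<Longrightarrow> passE g v \<Longrightarrow> st g f (v @ False # w) = rE f (v @ [False]) + rE False w"
proof (induction v arbitrary: g f)
  case Nil
  then show ?case by (simp add: passE_def)
next
  case (Cons x v)
  show ?case
  proof (cases x)
    case True
    have "nopass (\<lambda>b. g (Suc b)) v" using Cons.prems(1) True nopass_Cons_True by auto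
    moreover have "passE (\<lambda>b. g (Suc b)) v" using Cons.prems(2) True by (simp add: passE_def)
    ultimately show ?thesis using Cons.IH True by simp
  next
    case False
    have n: "nopass (\<lambda>b. g b - 1) v" "1 < g 0" using Cons.prems(1) False nopass_Cons_False by auto
    moreover have "passE (\<lambda>b. g b - 1) v" using Cons.prems(2) False by (simp add: passE_def)
    ultimately show ?thesis using Cons.IH False by simp
  qed
qed

lemma exists_pass:
  assumes "mono g" "\<forall>b. 1 \<le> g b" "\<not> nopass g Q"
  shows "\<exists>v w. Q = v @ False # w \<and> nopass g v \<and> passE g v"
  using assms
proof (induction Q arbitrary: g)
  case Nil
  have "1 \<le> g 0" using Nil by blast
  then show ?case using Nil by (simp add: nopass_def)
next
  case (Cons x Q)
  have g0: "0 < g 0" using Cons.prems(2) by (simp add: Suc_le_eq)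
  show ?case
  proof (cases x)
    case True
    have m: "mono (\<lambda>b. g (Suc b))" using Cons.prems(1) by (simp add: mono_def)
    have g1: "\<forall>b. 1 \<le> g (Suc b)" using Cons.prems(2) by blast
    have "\<not> nopass (\<lambda>b. g (Suc b)) Q" using Cons.prems(3) True nopass_Cons_True[of g Q] g0 by simp
    then obtain v w where vw: "Q = v @ False # w" "nopass (\<lambda>b. g (Suc b)) v" "passE (\<lambda>b. g (Suc b)) v"
      using Cons.IH[OF m g1] by blast
    have "nopass g (True # v)" using nopass_Cons_True[of g v] g0 vw(2) by simp
    moreover have "passE g (True # v)" using vw(3) by (simp add: passE_def)
    moreover have "x # Q = (True # v) @ False # w" using vw(1) True by simp
    ultimately show ?thesis by blast
  next
    case False
    show ?thesis
    proof (cases "g 0 \<le> 1")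
      case True
      have "nopass g []" using g0 by (simp add: nopass_def)
      moreover have "passE g []" using True by (simp add: passE_def)
      moreover have "x # Q = [] @ False # Q" using False by simp
      ultimately show ?thesis by blast
    next
      case g2: False
      have ge: "\<forall>b. 2 \<le> g b"
      proof
        fix b have "g 0 \<le> g b" using Cons.prems(1) by (simp add: monoD)
        then show "2 \<le> g b" using g2 by linarith
      qed
      have m: "mono (\<lambda>b. g b - 1)" using Cons.prems(1) by (simp add: mono_def diff_le_mono)
      have g1: "\<forall>b. 1 \<le> g b - 1"
      proof
        fix b show "1 \<le> g b - 1" using ge[rule_format, of b] by linarith
      qed
      have "\<not> nopass (\<lambda>b. g b - 1) Q" using Cons.prems(3) False nopass_Cons_False[of g Q] g2 g0 by simp
      then obtain v w where vw: "Q = v @ False # w" "nopass (\<lambda>b. g b - 1) v" "passE (\<lambda>b. g b - 1) v"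
        using Cons.IH[OF m g1] by blast
      have "nopass g (False # v)" using nopass_Cons_False[of g v] g0 g2 vw(2) by simp
      moreover have "passE g (False # v)" using vw(3) by (simp add: passE_def)
      moreover have "x # Q = (False # v) @ False # w" using vw(1) False by simp
      ultimately show ?thesis by blast
    qed
  qed
qed

lemma pass_unique_aux:
  assumes "v @ False # w = v' @ False # w'" "nopass g v'" "passE g v" "length v < length v'"
  shows False
proof -
  have "take (Suc (length v)) (v @ False # w) = v @ [False]" by simp
  moreover have "take (Suc (length v)) (v' @ False # w') = take (Suc (length v)) v'"
    using assms(4) by simp
  ultimately have "take (Suc (length v)) v' = v @ [False]" using assms(1) by simp
  moreover have "Suc (length v) \<le> length v'" using assms(4) by simp
  ultimately have "cF (v @ [False]) < g (cT (v @ [False]))" using assms(2) unfolding nopass_def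
    by (metis (no_types))
  then show False using assms(3) unfolding passE_def by simp
qed

lemma pass_unique:
  assumes "v @ False # w = v' @ False # w'" "nopass g v" "passE g v" "nopass g v'" "passE g v'"
  shows "v = v' \<and> w = w'"
proof -
  have "length v = length v'"
    using pass_unique_aux[OF assms(1) assms(4) assms(3)] pass_unique_aux[OF assms(1)[symmetric] assms(2) assms(5)]
    by (meson linorder_neqE_nat)
  then show ?thesis using assms(1) by simp
qed



lemma div_rev_lemma:
  fixes t k y :: nat
  assumes "0 < t" "y < k * t"
  shows "(k * t - 1 - y) div t = k - 1 - y div t"
proof -
  define q where "q = y div t"
  define r where "r = y mod t"
  have y: "y = q * t + r" unfolding q_def r_def by simp
  have r: "r < t" unfolding r_def using assms(1) by simp
  have qk: "q < k" using assms(2) y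
    by (metis add_lessD1 mult_less_cancel2)
  have e: "k * t - 1 - y = (t - 1 - r) + (k - 1 - q) * t"
  proof -
    have A: "(k - 1 - q) * t = k * t - 1 * t - q * t" by (simp add: diff_mult_distrib)
    have "(q + 1) * t \<le> k * t" using qk by (intro mult_le_mono1) simp
    then have B: "q * t + 1 * t \<le> k * t" by (simp add: add_mult_distrib)
    show ?thesis using A B y r by linarith
  qed
  have "(k * t - 1 - y) div t = (k - 1 - q) + (t - 1 - r) div t"
    unfolding e using assms(1) by simp
  also have "(t - 1 - r) div t = 0" using r by simp
  finally show ?thesis unfolding q_def by simp
qed

lemma core_arith:
  fixes s t k i b a e nu j :: nat
  assumes "0 < t" "i + nu + 1 = k * t" "e + 1 = s * (k - 1) + j" "b \<le> nu" "a \<le> e" "1 \<le> j"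
  shows "s * ((i + b) div t) \<le> a \<longleftrightarrow> e - a < s * ((nu - b) div t) + j"
proof -
  have k: "1 \<le> k" using assms(2) by (cases k) auto
  have y: "i + b < k * t" using assms(2,4) by linarith
  have nb: "nu - b = k * t - 1 - (i + b)" using assms(2,4) by linarith
  have d: "(nu - b) div t = k - 1 - (i + b) div t"
    unfolding nb using div_rev_lemma[OF assms(1) y] .
  define q where "q = (i + b) div t"
  have qk: "q \<le> k - 1"
  proof -
    have "q < k" unfolding q_def using y by (metis less_mult_imp_div_less)
    then show ?thesis by simp
  qed
  have m1: "s * (k - 1 - q) = s * (k - 1) - s * q" by (simp add: diff_mult_distrib2)
  have m2: "s * q \<le> s * (k - 1)" using qk by (intro mult_le_mono2)
  show ?thesis unfolding d q_def[symmetric] m1 using m2 assms(3,5) by linarith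
qed

lemma mod_eq_range:
  fixes r j s :: nat
  assumes "1 \<le> r" "r \<le> s" "1 \<le> j" "j \<le> s" "r mod s = j mod s"
  shows "r = j"
proof (cases "r = s")
  case True
  then have "j mod s = 0" using assms(5) by simp
  then show ?thesis using True assms(3,4) by (metis mod_less le_neq_implies_less not_one_le_zero)
next
  case False
  then have "r < s" using assms(2) by simp
  show ?thesis
  proof (cases "j = s")
    case True
    then have "r mod s = 0" using assms(5) by simp
    then show ?thesis using \<open>r < s\<close> assms(1) by simp
  next
    case False
    then show ?thesis using \<open>r < s\<close> assms(4,5) by simp
  qed
qed

definition gj :: "nat \<Rightarrow> nat \<Rightarrow> nat \<Rightarrow> nat \<Rightarrow> nat" where
  "gj s t j b = s * (b div t) + j"

definition belowP :: "nat \<Rightarrow> nat \<Rightarrow> nat \<Rightarrow> bool list \<Rightarrow> bool" where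
  "belowP s t i w \<longleftrightarrow> s * ((i + cT w) div t) \<le> cF w"

definition condP :: "nat \<Rightarrow> nat \<Rightarrow> nat \<Rightarrow> nat \<Rightarrow> bool list \<Rightarrow> bool" where
  "condP s t j i u \<longleftrightarrow> (\<forall>k\<le>length u. belowP s t i (take k u)) \<and> \<not> belowP s t i (u @ [True])
     \<and> Suc (cF u) mod s = j mod s"

lemma counts_drop:
  "cF (drop m u) = cF u - cF (take m u) \<and> cT (drop m u) = cT u - cT (take m u)"
proof -
  have "u = take m u @ drop m u" by simp
  then have "cF u = cF (take m u) + cF (drop m u)" "cT u = cT (take m u) + cT (drop m u)"
    by (metis count_list_append)+
  then show ?thesis by simp
qed

lemma counts_take_le: "cF (take m u) \<le> cF u \<and> cT (take m u) \<le> cT u"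
  using counts_drop[of m u] by (metis append_take_drop_id count_list_append le_add1)

lemma rev_cond:
  assumes s: "0 < s" and t: "0 < t" and i: "i < t" and j: "1 \<le> j" "j \<le> s"
  shows "condP s t j i u \<longleftrightarrow>
         nopass (gj s t j) (rev u) \<and> passE (gj s t j) (rev u) \<and> t dvd (i + Suc (cT u))"
proof -
  let ?e = "cF u" and ?nu = "cT u" and ?g = "gj s t j"
  have pre: "\<And>k. k \<le> length u \<Longrightarrow> take k (rev u) = rev (drop (length u - k) u)"
    by (simp add: take_rev)
  have nudiv: "\<And>k. i + ?nu + 1 = k * t \<Longrightarrow> ?nu div t = k - 1"
  proof -
    fix k assume a: "i + ?nu + 1 = k * t"
    have "i < k * t" using a by linarith
    have "?nu = k * t - 1 - i" using a by linarith
    then show "?nu div t = k - 1" using div_rev_lemma[OF t \<open>i < k * t\<close>] i by simp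
  qed
  have preq: "\<And>k. i + ?nu + 1 = k * t \<Longrightarrow> ?e + 1 = s * (k - 1) + j \<Longrightarrow>
      (\<forall>m\<le>length u. belowP s t i (take m u)) \<longleftrightarrow> nopass ?g (rev u)"
  proof -
    fix k assume k1: "i + ?nu + 1 = k * t" and k2: "?e + 1 = s * (k - 1) + j"
    have one: "\<And>m. m \<le> length u \<Longrightarrow> belowP s t i (take m u) \<longleftrightarrow>
        cF (rev (drop m u)) < ?g (cT (rev (drop m u)))"
    proof -
      fix m assume "m \<le> length u"
      have c: "cF (rev (drop m u)) = ?e - cF (take m u)" "cT (rev (drop m u)) = ?nu - cT (take m u)"
        using counts_drop[of m u] by simp_all
      show "belowP s t i (take m u) \<longleftrightarrow> cF (rev (drop m u)) < ?g (cT (rev (drop m u)))"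
        unfolding belowP_def c gj_def
        using core_arith[OF t k1 k2 _ _ j(1), of "cT (take m u)" "cF (take m u)"] counts_take_le[of m u]
        by simp
    qed
    show "(\<forall>m\<le>length u. belowP s t i (take m u)) \<longleftrightarrow> nopass ?g (rev u)"
    proof
      assume A: "\<forall>m\<le>length u. belowP s t i (take m u)"
      show "nopass ?g (rev u)" unfolding nopass_def
      proof (intro allI impI)
        fix k' assume "k' \<le> length (rev u)"
        then have "k' \<le> length u" by simp
        then have "take k' (rev u) = rev (drop (length u - k') u)" by (rule pre)
        moreover have "belowP s t i (take (length u - k') u)" using A by simp
        ultimately show "cF (take k' (rev u)) < ?g (cT (take k' (rev u)))" using one[of "length u - k'"] by simp
      qed
    next
      assume B: "nopass ?g (rev u)"
      show "\<forall>m\<le>length u. belowP s t i (take m u)"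
      proof (intro allI impI)
        fix m assume m: "m \<le> length u"
        have "length u - m \<le> length (rev u)" by simp
        then have "cF (take (length u - m) (rev u)) < ?g (cT (take (length u - m) (rev u)))"
          using B unfolding nopass_def by blast
        moreover have "take (length u - m) (rev u) = rev (drop m u)" using pre[of "length u - m"] m by simp
        ultimately show "belowP s t i (take m u)" using one[OF m] by simp
      qed
    qed
  qed
  show ?thesis
  proof
    assume C: "condP s t j i u"
    have B0: "s * ((i + ?nu) div t) \<le> ?e"
      using C unfolding condP_def belowP_def by (metis order_refl take_all)
    have B1: "\<not> s * ((i + Suc ?nu) div t) \<le> ?e"
      using C unfolding condP_def belowP_def by simp
    have neq: "(i + Suc ?nu) div t \<noteq> (i + ?nu) div t" using B0 B1 by auto
    have dv: "t dvd (i + Suc ?nu)"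
      using neq div_Suc[of "i + ?nu" t] by (auto simp: dvd_eq_mod_eq_0 split: if_splits)
    define k where "k = (i + Suc ?nu) div t"
    have k1: "i + ?nu + 1 = k * t" unfolding k_def using dv by simp
    have kpos: "1 \<le> k" using k1 by (cases k) auto
    have k0: "(i + ?nu) div t = k - 1" using neq div_Suc[of "i + ?nu" t] unfolding k_def
      by (auto split: if_splits)
    have lo: "s * (k - 1) \<le> ?e" using B0 k0 by simp
    have hi: "?e < s * k" using B1 unfolding k_def by simp
    define r where "r = Suc ?e - s * (k - 1)"
    have skk: "s * k = s * (k - 1) + s" using kpos by (cases k) auto
    have r1: "1 \<le> r" "r \<le> s" unfolding r_def using lo hi skk by linarith+
    have re: "Suc ?e = s * (k - 1) + r" unfolding r_def using lo by linarith
    have c0: "Suc ?e mod s = j mod s" using C unfolding condP_def by simp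
    have "(s * (k - 1) + r) mod s = r mod s" by simp
    then have "r mod s = j mod s" using c0 re by simp
    then have rj: "r = j" using mod_eq_range[OF r1 j] by simp
    have k2: "?e + 1 = s * (k - 1) + j" using re rj by simp
    have np: "nopass ?g (rev u)" using preq[OF k1 k2] C unfolding condP_def by blast
    have pe: "passE ?g (rev u)" unfolding passE_def gj_def using nudiv[OF k1] k2 by simp
    show "nopass ?g (rev u) \<and> passE ?g (rev u) \<and> t dvd (i + Suc ?nu)" using np pe dv by simp
  next
    assume Q: "nopass ?g (rev u) \<and> passE ?g (rev u) \<and> t dvd (i + Suc ?nu)"
    define k where "k = (i + Suc ?nu) div t"
    have k1: "i + ?nu + 1 = k * t" unfolding k_def using Q by simp
    have kpos: "1 \<le> k" using k1 by (cases k) auto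
    have nd: "?nu div t = k - 1" using nudiv[OF k1] .
    have "cF (take (length (rev u)) (rev u)) < ?g (cT (take (length (rev u)) (rev u)))"
      using Q unfolding nopass_def by blast
    then have lt: "?e < s * (k - 1) + j" unfolding gj_def using nd by simp
    have ge: "s * (k - 1) + j \<le> Suc ?e" using Q nd unfolding passE_def gj_def by simp
    have k2: "?e + 1 = s * (k - 1) + j" using lt ge by simp
    have A: "\<forall>m\<le>length u. belowP s t i (take m u)" using preq[OF k1 k2] Q by blast
    have skk: "s * k = s * (k - 1) + s" using kpos by (cases k) auto
    have nb: "\<not> belowP s t i (u @ [True])"
      unfolding belowP_def using k1 k2 skk j(2) t by simp
    have "(s * (k - 1) + j) mod s = j mod s" by simp
    then have cl: "Suc ?e mod s = j mod s" using k2 by simp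
    show "condP s t j i u" unfolding condP_def using A nb cl by simp
  qed
qed



lemma card_Suc_filter: "card {k. k < Suc m \<and> P k} = card {k. k < m \<and> P k} + (if P m then 1 else 0)"
proof -
  have e: "{k. k < Suc m \<and> P k} = {k. k < m \<and> P k} \<union> (if P m then {m} else {})" by (auto simp: less_Suc_eq)
  have f: "finite {k. k < m \<and> P k}" by simp
  show ?thesis unfolding e using f by (auto simp: card_insert_if)
qed

lemma card_notA:
  assumes "0 < s" "0 < t"
  shows "card {k. k < m \<and> \<not> A_step s t k} = (m div (s + t)) * s + min (m mod (s + t)) s"
proof (induction m)
  case 0 then show ?case by simp
next
  case (Suc m)
  have st: "0 < s + t" using assms by simp
  show ?case
  proof (cases "Suc (m mod (s + t)) = s + t")
    case True
    have d: "Suc m div (s + t) = Suc (m div (s + t))" using True div_Suc[of m "s+t"] mod_Suc[of m "s+t"] by simp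
    have md: "Suc m mod (s + t) = 0" using True mod_Suc[of m "s+t"] by simp
    have A: "A_step s t m" unfolding A_step_def using True assms by linarith
    have mn: "min (m mod (s + t)) s = s" using True assms by simp
    have "card {k. k < Suc m \<and> \<not> A_step s t k} = card {k. k < m \<and> \<not> A_step s t k}"
      using card_Suc_filter[of m "\<lambda>k. \<not> A_step s t k"] A by simp
    also have "\<dots> = m div (s + t) * s + s" using Suc.IH mn by simp
    also have "\<dots> = Suc m div (s + t) * s + min (Suc m mod (s + t)) s" using d md by simp
    finally show ?thesis .
  next
    case False
    have d: "Suc m div (s + t) = m div (s + t)" using False div_Suc[of m "s+t"] mod_Suc[of m "s+t"] by simp
    have md: "Suc m mod (s + t) = Suc (m mod (s + t))" using False mod_Suc[of m "s+t"] by simp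
    show ?thesis using card_Suc_filter[of m "\<lambda>k. \<not> A_step s t k"] Suc d md
      unfolding A_step_def by (auto simp: min_def)
  qed
qed

lemma card_A_compl: "card {k. k < m \<and> A_step s t k} + card {k. k < m \<and> \<not> A_step s t k} = m"
proof -
  have "{k. k < m \<and> A_step s t k} \<union> {k. k < m \<and> \<not> A_step s t k} = {..<m}" by auto
  moreover have "{k. k < m \<and> A_step s t k} \<inter> {k. k < m \<and> \<not> A_step s t k} = {}" by auto
  moreover have "card ({k. k < m \<and> A_step s t k} \<union> {k. k < m \<and> \<not> A_step s t k}) =
     card {k. k < m \<and> A_step s t k} + card {k. k < m \<and> \<not> A_step s t k}"
    by (rule card_Un_disjoint) auto
  ultimately show ?thesis by simp
qed

definition inA :: "nat \<Rightarrow> nat \<Rightarrow> nat \<Rightarrow> nat \<Rightarrow> bool" where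
  "inA s t X Y \<longleftrightarrow> (\<exists>q r. (r \<le> s \<and> X = q * s + r \<and> Y = (q + 1) * t) \<or>
                           (r \<le> t \<and> X = (q + 1) * s \<and> Y = (q + 1) * t + r))"

lemma A_pt_inA:
  assumes "0 < s" "0 < t"
  shows "\<exists>X Y. A_pt s t m = (int X, int Y) \<and> inA s t X Y"
proof -
  define d where "d = m div (s + t)"
  define r where "r = m mod (s + t)"
  have E: "card {k. k < m \<and> \<not> A_step s t k} = d * s + min r s" unfolding d_def r_def using card_notA[OF assms] .
  have m: "m = d * (s + t) + r" unfolding d_def r_def using div_mult_mod_eq[of m "s+t"] by simp
  have rl: "r < s + t" unfolding r_def using assms by simp
  have N: "card {k. k < m \<and> A_step s t k} = m - (d * s + min r s)" using card_A_compl[of m s t] E by simp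
  show ?thesis
  proof (cases "r \<le> s")
    case True
    have "A_pt s t m = (int (d * s + r), int ((d + 1) * t))"
      unfolding A_pt_def using E N True m by (simp add: algebra_simps)
    moreover have "inA s t (d * s + r) ((d + 1) * t)" unfolding inA_def using True by blast
    ultimately show ?thesis by blast
  next
    case False
    have "A_pt s t m = (int ((d + 1) * s), int ((d + 1) * t + (r - s)))"
      unfolding A_pt_def using E N False m by (simp add: algebra_simps)
    moreover have "inA s t ((d + 1) * s) ((d + 1) * t + (r - s))"
    proof -
      have "r - s \<le> t \<and> (d + 1) * s = (d + 1) * s \<and> (d + 1) * t + (r - s) = (d + 1) * t + (r - s)" using rl by simp
      then show ?thesis unfolding inA_def by blast
    qed
    ultimately show ?thesis by blast
  qed
qed

lemma A_pt_val:
  assumes "0 < s" "0 < t" "r \<le> s"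
  shows "A_pt s t (q * (s + t) + r) = (int (q * s + r), int ((q + 1) * t))"
proof -
  let ?m = "q * (s + t) + r"
  have d: "?m div (s + t) = q \<and> ?m mod (s + t) = r \<or> r = s + t" using assms
    by (cases "r < s + t") auto
  have E: "card {k. k < ?m \<and> \<not> A_step s t k} = q * s + r"
  proof (cases "r < s + t")
    case True
    then have "?m div (s + t) = q" "?m mod (s + t) = r" using assms by auto
    then show ?thesis using card_notA[OF assms(1,2), of ?m] assms(3) by simp
  next
    case False
    then show ?thesis using assms by simp
  qed
  have N: "card {k. k < ?m \<and> A_step s t k} = ?m - (q * s + r)" using card_A_compl[of ?m s t] E by simp
  show ?thesis unfolding A_pt_def using E N by (simp add: algebra_simps)
qed

lemma A_points_iff:
  assumes "0 < s" "0 < t"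
  shows "(int X, int Y) \<in> A_points s t \<Longrightarrow> inA s t X Y"
proof -
  assume "(int X, int Y) \<in> A_points s t"
  then obtain m where m: "A_pt s t m = (int X, int Y)" unfolding A_points_def by auto
  obtain X' Y' where "A_pt s t m = (int X', int Y')" "inA s t X' Y'" using A_pt_inA[OF assms] by blast
  then show ?thesis using m by simp
qed

definition belowN :: "nat \<Rightarrow> nat \<Rightarrow> nat \<Rightarrow> nat \<Rightarrow> bool" where
  "belowN s t X Y \<longleftrightarrow> s * (Y div t) < X"

lemma inA_not_below:
  assumes "0 < t" "inA s t X Y" shows "\<not> belowN s t X Y"
proof -
  obtain q r where qr: "(r \<le> s \<and> X = q * s + r \<and> Y = (q + 1) * t) \<or>
                         (r \<le> t \<and> X = (q + 1) * s \<and> Y = (q + 1) * t + r)"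
    using assms(2) unfolding inA_def by blast
  then show ?thesis
  proof
    assume a: "r \<le> s \<and> X = q * s + r \<and> Y = (q + 1) * t"
    then have "Y div t = q + 1" using assms(1) by simp
    then show ?thesis unfolding belowN_def using a by (simp add: algebra_simps)
  next
    assume a: "r \<le> t \<and> X = (q + 1) * s \<and> Y = (q + 1) * t + r"
    then have "q + 1 \<le> Y div t" using assms(1)
      by (metis div_le_mono le_add1 nonzero_mult_div_cancel_right not_gr0)
    then have "s * (q + 1) \<le> s * (Y div t)" by (rule mult_le_mono2)
    then show ?thesis unfolding belowN_def using a by (simp add: algebra_simps)
  qed
qed

lemma below_step_N:
  assumes s: "0 < s" and t: "0 < t" and b: "belowN s t X Y" and nb: "\<not> belowN s t X (Suc Y)"
  shows "(int X, int (Suc Y)) \<in> A_points s t"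
proof -
  have neq: "Suc Y div t \<noteq> Y div t" using b nb unfolding belowN_def by auto
  then have q1: "Suc Y div t = Suc (Y div t)" and dv: "Suc Y mod t = 0"
    using div_Suc[of Y t] by (auto split: if_splits)
  define q where "q = Y div t"
  have Y1: "Suc Y = (q + 1) * t" using q1 dv unfolding q_def
    by (metis add.commute add_0 div_mult_mod_eq mult.commute plus_1_eq_Suc)
  have lo: "s * q < X" using b unfolding belowN_def q_def .
  have hi: "X \<le> s * (q + 1)" using nb q1 unfolding belowN_def q_def by simp
  define r where "r = X - q * s"
  have X: "X = q * s + r" and r: "r \<le> s" using lo hi unfolding r_def by (simp_all add: algebra_simps)
  have "A_pt s t (q * (s + t) + r) = (int X, int (Suc Y))"
    using A_pt_val[OF s t r, of q] X Y1 by simp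
  then show ?thesis unfolding A_points_def by (metis rangeI)
qed



lemma pt_eq: "path_pt (1, int i) ws m = (int (Suc (cF (take m ws))), int (i + cT (take m ws)))"
  by (simp add: path_pt_def)

lemma belowP_N: "belowP s t i (take m ws) \<longleftrightarrow> belowN s t (Suc (cF (take m ws))) (i + cT (take m ws))"
  unfolding belowP_def belowN_def by (simp add: less_Suc_eq_le)

lemma below0: "i < t \<Longrightarrow> belowP s t i (take 0 ws)"
  unfolding belowP_def by simp

lemma A_not_below:
  assumes "0 < s" "0 < t" "path_pt (1, int i) ws m \<in> A_points s t"
  shows "\<not> belowP s t i (take m ws)"
proof -
  have "inA s t (Suc (cF (take m ws))) (i + cT (take m ws))"
    using A_points_iff[OF assms(1,2)] assms(3) unfolding pt_eq by blast
  then show ?thesis unfolding belowP_N using inA_not_below[OF assms(2)] by blast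
qed

lemma step_lemma:
  assumes s: "0 < s" and t: "0 < t" and m: "m < length ws"
    and b: "belowP s t i (take m ws)" and nb: "\<not> belowP s t i (take (Suc m) ws)"
  shows "ws ! m \<and> path_pt (1, int i) ws (Suc m) \<in> A_points s t"
proof -
  have tk: "take (Suc m) ws = take m ws @ [ws ! m]" using m by (simp add: take_Suc_conv_app_nth)
  have wm: "ws ! m"
  proof (rule ccontr)
    assume "\<not> ws ! m"
    then have "cF (take (Suc m) ws) = Suc (cF (take m ws))" "cT (take (Suc m) ws) = cT (take m ws)"
      using tk by simp_all
    then show False using b nb unfolding belowP_def by simp
  qed
  have c: "cF (take (Suc m) ws) = cF (take m ws)" "cT (take (Suc m) ws) = Suc (cT (take m ws))"
    using tk wm by simp_all
  have "belowN s t (Suc (cF (take m ws))) (i + cT (take m ws))" using b belowP_N by blast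
  moreover have "\<not> belowN s t (Suc (cF (take m ws))) (Suc (i + cT (take m ws)))"
    using nb belowP_N[of s t i "Suc m" ws] c by simp
  ultimately have "(int (Suc (cF (take m ws))), int (Suc (i + cT (take m ws)))) \<in> A_points s t"
    using below_step_N[OF s t] by blast
  then show ?thesis using wm c unfolding pt_eq by simp
qed

lemma path_points_eq: "path_points p0 ws = {path_pt p0 ws m | m. m \<le> length ws}"
  unfolding path_points_def by simp

lemma charU:
  assumes s: "0 < s" and t: "0 < t" and j: "1 \<le> j" "j \<le> s" and i: "i < t"
  shows "(path_points (1, int i) ws \<inter> A_points s t \<noteq> {} \<and>
          fst (first_hit s t (1, int i) ws) mod int s = int j mod int s) \<longleftrightarrow>
         (\<exists>u P2. ws = u @ True # P2 \<and> condP s t j i u)"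
proof
  assume H: "path_points (1, int i) ws \<inter> A_points s t \<noteq> {} \<and>
          fst (first_hit s t (1, int i) ws) mod int s = int j mod int s"
  then obtain m where m: "m \<le> length ws" "path_pt (1, int i) ws m \<in> A_points s t"
    unfolding path_points_def by blast
  have nbm: "\<not> belowP s t i (take m ws)" using A_not_below[OF s t m(2)] .
  define m0 where "m0 = (LEAST m. m \<le> length ws \<and> \<not> belowP s t i (take m ws))"
  have m0: "m0 \<le> length ws" "\<not> belowP s t i (take m0 ws)"
    using LeastI[of "\<lambda>m. m \<le> length ws \<and> \<not> belowP s t i (take m ws)" m] m(1) nbm unfolding m0_def by auto
  have before: "\<And>k. k < m0 \<Longrightarrow> belowP s t i (take k ws)"
    using not_less_Least m0(1) unfolding m0_def by fastforce
  have m0pos: "0 < m0" using m0(2) below0[OF i] by (cases m0) auto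
  define m1 where "m1 = m0 - 1"
  have m0s: "m0 = Suc m1" unfolding m1_def using m0pos by simp
  have m1l: "m1 < length ws" using m0(1) m0s by simp
  have stp: "ws ! m1 \<and> path_pt (1, int i) ws m0 \<in> A_points s t"
    using step_lemma[OF s t m1l before[of m1]] m0(2) m0s by simp
  have least: "(LEAST m. m \<le> length ws \<and> path_pt (1, int i) ws m \<in> A_points s t) = m0"
  proof (rule Least_equality)
    show "m0 \<le> length ws \<and> path_pt (1, int i) ws m0 \<in> A_points s t" using m0(1) stp by simp
  next
    fix y assume "y \<le> length ws \<and> path_pt (1, int i) ws y \<in> A_points s t"
    then have "y \<le> length ws \<and> \<not> belowP s t i (take y ws)" using A_not_below[OF s t] by blast
    then show "m0 \<le> y" unfolding m0_def by (rule Least_le)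
  qed
  define u where "u = take m1 ws"
  define P2 where "P2 = drop m0 ws"
  have ws: "ws = u @ True # P2" unfolding u_def P2_def m0s
    using id_take_nth_drop[OF m1l] stp by simp
  have tm0: "take m0 ws = u @ [True]" unfolding u_def m0s using m1l stp by (simp add: take_Suc_conv_app_nth)
  have fh: "fst (first_hit s t (1, int i) ws) = int (Suc (cF u))"
  proof -
    have "first_hit s t (1, int i) ws = path_pt (1, int i) ws m0" unfolding first_hit_def least ..
    then show ?thesis unfolding pt_eq tm0 by simp
  qed
  have cl: "Suc (cF u) mod s = j mod s"
  proof -
    have "int (Suc (cF u)) mod int s = int j mod int s" using H fh by simp
    then have "int (Suc (cF u) mod s) = int (j mod s)" by (simp add: zmod_int)
    then show ?thesis by simp
  qed
  have "condP s t j i u" unfolding condP_def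
  proof (intro conjI allI impI)
    fix k assume "k \<le> length u"
    then have "k < m0" "take k u = take k ws" unfolding u_def using m1l m0s by auto
    then show "belowP s t i (take k u)" using before by simp
  next
    show "\<not> belowP s t i (u @ [True])" using m0(2) tm0 by simp
  next
    show "Suc (cF u) mod s = j mod s" by (rule cl)
  qed
  then show "\<exists>u P2. ws = u @ True # P2 \<and> condP s t j i u" using ws by blast
next
  assume "\<exists>u P2. ws = u @ True # P2 \<and> condP s t j i u"
  then obtain u P2 where ws: "ws = u @ True # P2" and C: "condP s t j i u" by blast
  define m0 where "m0 = Suc (length u)"
  have tk: "\<And>k. k \<le> length u \<Longrightarrow> take k ws = take k u" unfolding ws by simp
  have bel: "\<And>k. k \<le> length u \<Longrightarrow> belowP s t i (take k ws)" using C tk unfolding condP_def by simp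
  have tm0: "take m0 ws = u @ [True]" unfolding ws m0_def by simp
  have nb: "\<not> belowP s t i (take m0 ws)" using C tm0 unfolding condP_def by simp
  have l: "length u < length ws" unfolding ws by simp
  have inA0: "path_pt (1, int i) ws m0 \<in> A_points s t"
    using step_lemma[OF s t l bel[of "length u"]] nb unfolding m0_def by simp
  have m0l: "m0 \<le> length ws" unfolding m0_def ws by simp
  have least: "(LEAST m. m \<le> length ws \<and> path_pt (1, int i) ws m \<in> A_points s t) = m0"
  proof (rule Least_equality)
    show "m0 \<le> length ws \<and> path_pt (1, int i) ws m0 \<in> A_points s t" using m0l inA0 by simp
  next
    fix y assume "y \<le> length ws \<and> path_pt (1, int i) ws y \<in> A_points s t"
    then have "\<not> belowP s t i (take y ws)" using A_not_below[OF s t] by blast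
    then have "\<not> y \<le> length u" using bel by blast
    then show "m0 \<le> y" unfolding m0_def by simp
  qed
  have fh: "fst (first_hit s t (1, int i) ws) = int (Suc (cF u))"
  proof -
    have "first_hit s t (1, int i) ws = path_pt (1, int i) ws m0" unfolding first_hit_def least ..
    then show ?thesis unfolding pt_eq tm0 by simp
  qed
  have cl: "Suc (cF u) mod s = j mod s" using C unfolding condP_def by simp
  have "int (Suc (cF u)) mod int s = int j mod int s"
    using cl by (metis of_nat_mod)
  moreover have "path_points (1, int i) ws \<inter> A_points s t \<noteq> {}"
    using inA0 m0l unfolding path_points_def by blast
  ultimately show "path_points (1, int i) ws \<inter> A_points s t \<noteq> {} \<and>
          fst (first_hit s t (1, int i) ws) mod int s = int j mod int s" using fh by simp
qed



lemma rE_append: "rE f (xs @ ys) = rE f xs + rE (if xs = [] then f else \<not> last xs) ys"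
proof (induction xs arbitrary: f)
  case Nil then show ?case by simp
next
  case (Cons x xs)
  show ?case by (cases x) (auto simp: Cons.IH)
qed

lemma rE_FT: "rE False w = rE True w + (if w \<noteq> [] \<and> \<not> hd w then 1 else 0)"
proof (cases w)
  case Nil then show ?thesis by simp
next
  case (Cons x w')
  then show ?thesis by (cases x) auto
qed

lemma rE_rev: "rE False (rev u) = rE False u"
proof (induction u rule: rev_induct)
  case Nil then show ?case by simp
next
  case (snoc x u)
  have r: "rE False (u @ [x]) = rE False u + rE (if u = [] then False else \<not> last u) [x]"
    by (rule rE_append)
  have h: "rE False (rev u) = rE True (rev u) + (if u \<noteq> [] \<and> \<not> last u then 1 else 0)"
    using rE_FT[of "rev u"] by (simp add: hd_rev)
  show ?case using r h snoc by (cases x) auto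
qed

lemma rE_rev_snoc: "rE False (rev u @ [False]) = Suc (rE True u)"
proof -
  have "rE False (rev u @ [False]) = rE False (rev u) + (if u \<noteq> [] \<and> \<not> hd u then 0 else 1)"
    using rE_append[of False "rev u" "[False]"] by (simp add: last_rev)
  also have "\<dots> = rE True u + (if u \<noteq> [] \<and> \<not> hd u then 1 else 0) + (if u \<noteq> [] \<and> \<not> hd u then 0 else 1)"
    using rE_rev rE_FT[of u] by simp
  finally show ?thesis by simp
qed

lemma Collect_nat_split: "{k::nat. P k} = {k. k = 0 \<and> P 0} \<union> Suc ` {k. P (Suc k)}"
proof (intro set_eqI iffI)
  fix k assume "k \<in> {k. P k}"
  then show "k \<in> {k. k = 0 \<and> P 0} \<union> Suc ` {k. P (Suc k)}" by (cases k) auto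
next
  fix k assume "k \<in> {k. k = 0 \<and> P 0} \<union> Suc ` {k. P (Suc k)}"
  then show "k \<in> {k. P k}" by auto
qed

lemma nw_rE: "nw_corners w = rE True w"
proof (induction w)
  case Nil then show ?case by (simp add: nw_corners_def)
next
  case (Cons x w)
  let ?P = "\<lambda>k. Suc k < length (x # w) \<and> (x # w) ! k \<and> \<not> (x # w) ! Suc k"
  have e: "{k. ?P k} = {k::nat. k = 0 \<and> ?P 0} \<union> Suc ` {k. Suc k < length w \<and> w ! k \<and> \<not> w ! Suc k}"
    using Collect_nat_split[of ?P] by simp
  have f: "finite {k. Suc k < length w \<and> w ! k \<and> \<not> w ! Suc k}" by (rule finite_subset[of _ "{..<length w}"]) auto
  have d: "{k::nat. k = 0 \<and> ?P 0} \<inter> Suc ` {k. Suc k < length w \<and> w ! k \<and> \<not> w ! Suc k} = {}" by auto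
  have c0: "finite {k::nat. k = 0 \<and> ?P 0}" by simp
  have "card ({k::nat. k = 0 \<and> ?P 0} \<union> Suc ` {k. Suc k < length w \<and> w ! k \<and> \<not> w ! Suc k}) = card {k::nat. k = 0 \<and> ?P 0} + card (Suc ` {k. Suc k < length w \<and> w ! k \<and> \<not> w ! Suc k})"
    using card_Un_disjoint[OF c0 finite_imageI[OF f] d] .
  then have "card {k. ?P k} = card {k::nat. k = 0 \<and> ?P 0} + card (Suc ` {k. Suc k < length w \<and> w ! k \<and> \<not> w ! Suc k})"
    using e by simp
  then have "nw_corners (x # w) = card {k::nat. k = 0 \<and> ?P 0} + nw_corners w"
    unfolding nw_corners_def by (simp add: card_image)
  also have "card {k::nat. k = 0 \<and> ?P 0} = (if x \<and> w \<noteq> [] \<and> \<not> hd w then 1 else 0)"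
  proof -
    have "{k::nat. k = 0 \<and> ?P 0} = (if ?P 0 then {0} else {})" by auto
    moreover have "?P 0 \<longleftrightarrow> x \<and> w \<noteq> [] \<and> \<not> hd w" by (cases w) auto
    ultimately show ?thesis by simp
  qed
  finally show ?case using Cons rE_FT[of w] by (cases x) auto
qed

lemma dvd_unique:
  fixes i i' c t :: nat
  assumes "t dvd (i + c)" "t dvd (i' + c)" "i < t" "i' < t"
  shows "i = i'"
proof (rule ccontr)
  assume ne: "i \<noteq> i'"
  { fix a b :: nat assume "t dvd (a + c)" "t dvd (b + c)" "a < b" "b < t"
    then have "t dvd ((b + c) - (a + c))" using dvd_diff_nat[of t "b + c" "a + c"] by blast
    then have "t dvd (b - a)" by simp
    moreover have "0 < b - a" "b - a < t" using \<open>a < b\<close> \<open>b < t\<close> by auto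
    ultimately have False by (simp add: nat_dvd_not_less) }
  then show False using assms ne by (metis linorder_neqE_nat)
qed

lemma exists_i: fixes t c :: nat shows "0 < t \<Longrightarrow> \<exists>i<t. t dvd (i + c)"
proof -
  assume t: "0 < t"
  define i where "i = (t - c mod t) mod t"
  have "i < t" unfolding i_def using t by simp
  moreover have "t dvd (i + c)"
  proof (cases "c mod t = 0")
    case True then show ?thesis unfolding i_def by (simp add: dvd_eq_mod_eq_0)
  next
    case False
    then have "i = t - c mod t" unfolding i_def using t by simp
    then have eq: "i + c = t + (c - c mod t)" using mod_le_divisor[OF t, of c] mod_less_eq_dividend[of c t] by linarith
    have "t dvd (c - c mod t)" by (simp add: minus_mod_eq_mult_div)
    then have "t dvd (t + (c - c mod t))" by (rule dvd_add[OF dvd_refl])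
    then show ?thesis unfolding eq .
  qed
  ultimately show ?thesis by blast
qed



lemma condP_unique_aux:
  assumes "u @ True # P2 = u' @ True # P2'" "condP s t j i u" "condP s t j i u'" "length u < length u'"
  shows False
proof -
  have "take (Suc (length u)) (u @ True # P2) = u @ [True]" by simp
  moreover have "take (Suc (length u)) (u' @ True # P2') = take (Suc (length u)) u'" using assms(4) by simp
  ultimately have tk: "take (Suc (length u)) u' = u @ [True]" using assms(1) by simp
  have "Suc (length u) \<le> length u'" using assms(4) by simp
  then have "belowP s t i (take (Suc (length u)) u')" using assms(3) unfolding condP_def by blast
  then show False using assms(2) tk unfolding condP_def by simp
qed

lemma condP_unique:
  assumes "u @ True # P2 = u' @ True # P2'" "condP s t j i u" "condP s t j i u'"
  shows "u = u' \<and> P2 = P2'"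
proof -
  have "length u = length u'"
    using condP_unique_aux[OF assms(1) assms(2,3)] condP_unique_aux[OF assms(1)[symmetric] assms(3,2)]
    by (meson linorder_neqE_nat)
  then show ?thesis using assms(1) by simp
qed

lemma filter_image: "{p \<in> f ` D. P p} = f ` {d \<in> D. P (f d)}" by blast

theorem main_gen:
  fixes s t n j :: nat
  assumes s: "0 < s" and t: "0 < t" and n: "0 < n" and j: "1 \<le> j" "j \<le> s"
  shows "card (U_set s t n j) = (s * n + t * n) choose (t * n - 1)
         \<and> (\<forall>c::nat. 0 < c \<longrightarrow>
              card {p \<in> U_set s t n j. nw_corners (snd p) = c - 1}
              = (if c < 2 then 0 else (s * n - 1) choose (c - 2)) * ((t * n + 1) choose c))"
proof -
  let ?g = "gj s t j"
  define D where "D = {(i, u, P2). i < t \<and> condP s t j i u \<and> cF u + cF P2 = s * n \<and> Suc (cT u + cT P2) = t * n}"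
  define f1 :: "nat \<times> bool list \<times> bool list \<Rightarrow> nat \<times> bool list" where "f1 = (\<lambda>(i, u, P2). (i, u @ True # P2))"
  define f2 :: "nat \<times> bool list \<times> bool list \<Rightarrow> bool list" where "f2 = (\<lambda>(i, u, P2). rev u @ False # P2)"
  have tn: "1 \<le> t * n" using t n by simp
  have mono_g: "mono ?g" unfolding mono_def gj_def by (simp add: div_le_mono)
  have g1: "\<forall>b. 1 \<le> ?g b" using j unfolding gj_def by simp
  have tdiv: "(t * n - 1) div t = n - 1"
    using div_rev_lemma[OF t, of 0 n] tn by (simp add: mult.commute)
  have gtop: "?g (t * n - 1) \<le> s * n"
  proof -
    have "?g (t * n - 1) = s * (n - 1) + j" unfolding gj_def tdiv ..
    also have "\<dots> \<le> s * (n - 1) + s" using j by simp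
    also have "\<dots> = s * n" using n by (cases n) auto
    finally show ?thesis .
  qed
  have revc: "\<And>i u. i < t \<Longrightarrow> condP s t j i u \<longleftrightarrow> nopass ?g (rev u) \<and> passE ?g (rev u) \<and> t dvd (i + Suc (cT u))"
    using rev_cond[OF s t _ j] by blast
  have U_eq: "U_set s t n j = f1 ` D"
  proof
    show "U_set s t n j \<subseteq> f1 ` D"
    proof
      fix p assume pU: "p \<in> U_set s t n j"
      obtain i ws where p: "p = (i, ws)" by (cases p)
      have T: "i < t" "length ws = s * n + t * n" "cT ws = t * n"
        using pU p unfolding U_set_def T_set_def by auto
      have H: "path_points (1, int i) ws \<inter> A_points s t \<noteq> {} \<and>
          fst (first_hit s t (1, int i) ws) mod int s = int j mod int s"
        using pU p unfolding U_set_def by auto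
      obtain u P2 where ws: "ws = u @ True # P2" and C: "condP s t j i u"
        using charU[OF s t j T(1)] H by blast
      have "cF ws = s * n" using T(2,3) length_count[of ws] by simp
      then have "cF u + cF P2 = s * n" "Suc (cT u + cT P2) = t * n" using ws T(3) by simp_all
      then have "(i, u, P2) \<in> D" unfolding D_def using T(1) C by simp
      moreover have "p = f1 (i, u, P2)" unfolding f1_def p ws by simp
      ultimately show "p \<in> f1 ` D" by blast
    qed
  next
    show "f1 ` D \<subseteq> U_set s t n j"
    proof
      fix p assume "p \<in> f1 ` D"
      then obtain i u P2 where d: "(i, u, P2) \<in> D" and p: "p = (i, u @ True # P2)" unfolding f1_def by auto
      have c: "i < t" "condP s t j i u" "cF u + cF P2 = s * n" "Suc (cT u + cT P2) = t * n"
        using d unfolding D_def by auto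
      let ?ws = "u @ True # P2"
      have "length ?ws = s * n + t * n" using length_count[of ?ws] c(3,4) by simp
      moreover have "cT ?ws = t * n" using c(4) by simp
      moreover have "path_points (1, int i) ?ws \<inter> A_points s t \<noteq> {} \<and>
          fst (first_hit s t (1, int i) ?ws) mod int s = int j mod int s"
        using charU[OF s t j c(1), of ?ws] c(2) by blast
      ultimately show "p \<in> U_set s t n j" unfolding U_set_def T_set_def p using c(1) by simp
    qed
  qed
  have inj1: "inj_on f1 D"
  proof (rule inj_onI)
    fix x y assume x: "x \<in> D" and y: "y \<in> D" and e: "f1 x = f1 y"
    obtain i u P2 where xx: "x = (i, u, P2)" by (cases x) auto
    obtain i' u' P2' where yy: "y = (i', u', P2')" by (cases y) auto
    have ii: "i = i'" and ee: "u @ True # P2 = u' @ True # P2'" using e unfolding xx yy f1_def by auto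
    have "condP s t j i u" "condP s t j i u'" using x y ii unfolding xx yy D_def by auto
    then show "x = y" using condP_unique[OF ee] ii xx yy by simp
  qed
  have inj2: "inj_on f2 D"
  proof (rule inj_onI)
    fix x y assume x: "x \<in> D" and y: "y \<in> D" and e: "f2 x = f2 y"
    obtain i u P2 where xx: "x = (i, u, P2)" by (cases x) auto
    obtain i' u' P2' where yy: "y = (i', u', P2')" by (cases y) auto
    have ee: "rev u @ False # P2 = rev u' @ False # P2'" using e unfolding xx yy f2_def by auto
    have cx: "i < t" "condP s t j i u" using x unfolding xx D_def by auto
    have cy: "i' < t" "condP s t j i' u'" using y unfolding yy D_def by auto
    have qx: "nopass ?g (rev u)" "passE ?g (rev u)" "t dvd (i + Suc (cT u))" using revc[OF cx(1)] cx(2) by auto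
    have qy: "nopass ?g (rev u')" "passE ?g (rev u')" "t dvd (i' + Suc (cT u'))" using revc[OF cy(1)] cy(2) by auto
    have "rev u = rev u' \<and> P2 = P2'" using pass_unique[OF ee qx(1,2) qy(1,2)] .
    then have uu: "u = u'" "P2 = P2'" by auto
    have "i = i'" using dvd_unique[OF qx(3) _ cx(1) cy(1)] qy(3) uu by simp
    then show "x = y" using uu xx yy by simp
  qed
  have Q_eq: "words (s * n + 1) (t * n - 1) = f2 ` D"
  proof
    show "f2 ` D \<subseteq> words (s * n + 1) (t * n - 1)"
    proof
      fix Q assume "Q \<in> f2 ` D"
      then obtain i u P2 where d: "(i, u, P2) \<in> D" and Q: "Q = rev u @ False # P2" unfolding f2_def by auto
      have c: "cF u + cF P2 = s * n" "Suc (cT u + cT P2) = t * n" using d unfolding D_def by auto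
      show "Q \<in> words (s * n + 1) (t * n - 1)" unfolding words_def Q using c by simp
    qed
  next
    show "words (s * n + 1) (t * n - 1) \<subseteq> f2 ` D"
    proof
      fix Q assume Qw: "Q \<in> words (s * n + 1) (t * n - 1)"
      have cQ: "cF Q = s * n + 1" "cT Q = t * n - 1" using Qw unfolding words_def by auto
      have "\<not> nopass ?g Q"
      proof
        assume "nopass ?g Q"
        then have "cF (take (length Q) Q) < ?g (cT (take (length Q) Q))" unfolding nopass_def by blast
        then show False using cQ gtop by simp
      qed
      then obtain v w where vw: "Q = v @ False # w" "nopass ?g v" "passE ?g v"
        using exists_pass[OF mono_g g1] by blast
      obtain i where i: "i < t" "t dvd (i + Suc (cT (rev v)))" using exists_i[OF t] by blast
      have C: "condP s t j i (rev v)" using revc[OF i(1), of "rev v"] vw(2,3) i(2) by simp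
      have cnt: "cF (rev v) + cF w = s * n" "Suc (cT (rev v) + cT w) = t * n" using cQ vw(1) tn by simp_all
      have "(i, rev v, w) \<in> D" unfolding D_def using i(1) C cnt by simp
      moreover have "Q = f2 (i, rev v, w)" unfolding f2_def using vw(1) by simp
      ultimately show "Q \<in> f2 ` D" by blast
    qed
  qed
  have corner: "\<And>d. d \<in> D \<Longrightarrow> st ?g False (f2 d) = Suc (nw_corners (snd (f1 d)))"
  proof -
    fix d assume dD: "d \<in> D"
    obtain i u P2 where dd: "d = (i, u, P2)" by (cases d) auto
    have c: "i < t" "condP s t j i u" using dD unfolding dd D_def by auto
    have q: "nopass ?g (rev u)" "passE ?g (rev u)" using revc[OF c(1)] c(2) by auto
    have "st ?g False (f2 d) = rE False (rev u @ [False]) + rE False P2"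
      unfolding dd f2_def using st_decomp[OF q] by simp
    also have "\<dots> = Suc (rE True u) + rE False P2" using rE_rev_snoc by simp
    finally have A: "st ?g False (f2 d) = Suc (rE True u) + rE False P2" .
    have "rE True u + rE False P2 = nw_corners (snd (f1 d))"
      unfolding dd f1_def nw_rE using rE_append[of True u "True # P2"] by simp
    then show "st ?g False (f2 d) = Suc (nw_corners (snd (f1 d)))" using A by simp
  qed
  have gk: "gok ?g (s * n + 1) (t * n - 1)"
    unfolding gok_def
  proof (intro conjI allI impI)
    fix b assume b: "b \<le> t * n - 1"
    show "1 \<le> ?g b" using g1 by blast
    have "?g b \<le> ?g (t * n - 1)" using mono_g b by (simp add: monoD)
    then show "?g b < s * n + 1" using gtop by simp
  next
    fix b b' :: nat assume "b \<le> b'"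
    then show "?g b \<le> ?g b'" using mono_g by (simp add: monoD)
  qed
  have cardD: "card (U_set s t n j) = card D" unfolding U_eq using card_image[OF inj1] .
  have cardD2: "card (words (s * n + 1) (t * n - 1)) = card D" unfolding Q_eq using card_image[OF inj2] .
  have part1: "card (U_set s t n j) = (s * n + t * n) choose (t * n - 1)"
    using cardD cardD2 card_words[of "s * n + 1" "t * n - 1"] tn by simp
  have part2: "\<forall>c::nat. 0 < c \<longrightarrow>
              card {p \<in> U_set s t n j. nw_corners (snd p) = c - 1}
              = (if c < 2 then 0 else (s * n - 1) choose (c - 2)) * ((t * n + 1) choose c)"
  proof (intro allI impI)
    fix c :: nat assume c: "0 < c"
    have "card {p \<in> U_set s t n j. nw_corners (snd p) = c - 1} = card (f1 ` {d \<in> D. nw_corners (snd (f1 d)) = c - 1})"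
      unfolding U_eq filter_image ..
    also have "\<dots> = card {d \<in> D. nw_corners (snd (f1 d)) = c - 1}"
      by (rule card_image) (rule inj_on_subset[OF inj1], blast)
    also have "{d \<in> D. nw_corners (snd (f1 d)) = c - 1} = {d \<in> D. st ?g False (f2 d) = c}"
      using corner c by force
    also have "card {d \<in> D. st ?g False (f2 d) = c} = card (f2 ` {d \<in> D. st ?g False (f2 d) = c})"
      by (rule card_image[symmetric]) (rule inj_on_subset[OF inj2], blast)
    also have "f2 ` {d \<in> D. st ?g False (f2 d) = c} = {Q \<in> words (s * n + 1) (t * n - 1). st ?g False Q = c}"
      unfolding Q_eq filter_image ..
    also have "card \<dots> = aF (s * n + 1) (t * n - 1) c" using card_st[OF gk] by blast
    also have "\<dots> = (if c < 2 then 0 else (s * n - 1) choose (c - 2)) * ((t * n + 1) choose c)"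
      unfolding aF_def using tn by simp
    finally show "card {p \<in> U_set s t n j. nw_corners (snd p) = c - 1}
              = (if c < 2 then 0 else (s * n - 1) choose (c - 2)) * ((t * n + 1) choose c)" .
  qed
  show ?thesis using part1 part2 by blast
qed


theorem mainTheorem8:
  fixes s t n j :: nat
  assumes "0 < s" and "0 < t" and "0 < n" and "1 \<le> j" and "j \<le> s"
  shows "card (U_set s t n j) = (s * n + t * n) choose (t * n - 1)
         \<and> (\<forall>c::nat. 0 < c \<longrightarrow>
              card {p \<in> U_set s t n j. nw_corners (snd p) = c - 1}
              = (if c < 2 then 0 else (s * n - 1) choose (c - 2)) * ((t * n + 1) choose c))"
  using main_gen[OF assms] .

end
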